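(* Let $\overrightarrow{U}(t)$ be a closed unit timelike dual curve in the 3-dimensional dual Lorentzian space with dual Frenet frame $\{\overrightarrow{U_1},\overrightarrow{U_2},\overrightarrow{U_3}\}$, dual curvature $\kappa$ and dual torsion $\tau$, let $\Phi=\varphi+\varepsilon\varphi^*$ be a constant dual number, let $(V_1)$ be the parallel ruled surface of $(U_1)$, corresponding to $\overrightarrow{V_1}=\cosh\Phi\,\overrightarrow{U_1}+\sinh\Phi\,\overrightarrow{U_3}$, and let $(V_2)$ be the closed ruled surface corresponding to $\overrightarrow{V_2}=\overrightarrow{U_2}$. With $P=p+\varepsilon p^*=\kappa\cosh\Phi+\tau\sinh\Phi$ and $Q=q+\varepsilon q^*=-\kappa\sinh\Phi-\tau\cosh\Phi$, the pitch, the dual angle of pitch and the drall of $(V_2)$ are $$L_{V_2}=0,\qquad \Lambda_{V_2}=0,\qquad P_{V_2}=\frac{qq^*-pp^*}{q^2-p^2}.$$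
   Context: Dual numbers are $\lambda+\varepsilon\lambda^*$ with $\lambda,\lambda^*\in\mathbb{R}$ and $\varepsilon^2=0$; dual vectors are $\overrightarrow{A}=\overrightarrow{a}+\varepsilon\overrightarrow{a}^*$ with $\overrightarrow{a},\overrightarrow{a}^*\in\mathbb{R}^3$. The Lorentzian inner product on $\mathbb{R}^3$ is $\langle a,b\rangle=-a_1b_1+a_2b_2+a_3b_3$, extended to dual vectors by $\langle \overrightarrow{A},\overrightarrow{B}\rangle=\langle\overrightarrow{a},\overrightarrow{b}\rangle+\varepsilon(\langle\overrightarrow{a},\overrightarrow{b}^*\rangle+\langle\overrightarrow{a}^*,\overrightarrow{b}\rangle)$. For a dual number $\Phi=\varphi+\varepsilon\varphi^*$: $\sinh\Phi=\sinh\varphi+\varepsilon\varphi^*\cosh\varphi$, $\cosh\Phi=\cosh\varphi+\varepsilon\varphi^*\sinh\varphi$. The closed unit timelike dual curve $\overrightarrow{U}(t)$ (integrals $\oint$ over one closed period of $t$) has Frenet frame $\overrightarrow{U_1}=\overrightarrow{U}$ (timelike), $\overrightarrow{U_2},\overrightarrow{U_3}$ (spacelike), mutually orthogonal unit dual vectors, satisfying $\overrightarrow{U_1}'=\kappa\overrightarrow{U_2}$, $\overrightarrow{U_2}'=\kappa\overrightarrow{U_1}-\tau\overrightarrow{U_3}$, $\overrightarrow{U_3}'=\tau\overrightarrow{U_2}$. Set $\overrightarrow{V_3}=-\sinh\Phi\,\overrightarrow{U_1}-\cosh\Phi\,\overrightarrow{U_3}$; then $\overrightarrow{V_1}'=P\overrightarrow{V_2}$,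 $\overrightarrow{V_2}'=P\overrightarrow{V_1}-Q\overrightarrow{V_3}$, $\overrightarrow{V_3}'=Q\overrightarrow{V_2}$. Write $\overrightarrow{V_i}=\overrightarrow{v_i}+\varepsilon\overrightarrow{v_i}^*$. The dual Steiner vector is taken (frame vectors written outside the integrals) as $\overrightarrow{D}=\overrightarrow{d}+\varepsilon\overrightarrow{d}^*=\overrightarrow{U_1}\oint\tau\,dt-\overrightarrow{U_3}\oint\kappa\,dt=-\overrightarrow{V_1}\oint Q\,dt+\overrightarrow{V_3}\oint P\,dt$, so $\overrightarrow{d}=-\overrightarrow{v_1}\oint q\,dt+\overrightarrow{v_3}\oint p\,dt$, $\overrightarrow{d}^*=-\overrightarrow{v_1}\oint q^*dt-\overrightarrow{v_1}^*\oint q\,dt+\overrightarrow{v_3}\oint p^*dt+\overrightarrow{v_3}^*\oint p\,dt$. For the closed ruled surface corresponding to a unit dual curve $\overrightarrow{X}=\overrightarrow{x}+\varepsilon\overrightarrow{x}^*$: pitch $L_X=\langle\overrightarrow{d},\overrightarrow{x}^*\rangle+\langle\overrightarrow{d}^*,\overrightarrow{x}\rangle$, dual angle of pitch $\Lambda_X=-\langle\overrightarrow{D},\overrightarrow{X}\rangle$, drall $P_X=\langle d\overrightarrow{x},d\overrightarrow{x}^*\rangle/\langle d\overrightarrow{x},d\overrightarrow{x}\rangle$. *)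

theory Defs
  imports "HOL-Analysis.Analysis"
begin

text \<open>Dual numbers \<lambda> + \<epsilon>\<lambda>* are pairs (\<lambda>, \<lambda>*); dual vectors a + \<epsilon>a* are pairs (a, a*)
  of vectors in R^3.\<close>

type_synonym dnum = "real \<times> real"
type_synonym dvec = "(real^3) \<times> (real^3)"

definition linner :: "real^3 \<Rightarrow> real^3 \<Rightarrow> real" where
  "linner a b = - (a$1 * b$1) + a$2 * b$2 + a$3 * b$3"

definition dmult :: "dnum \<Rightarrow> dnum \<Rightarrow> dnum" where
  "dmult x y = (fst x * fst y, fst x * snd y + snd x * fst y)"

definition dadd :: "dnum \<Rightarrow> dnum \<Rightarrow> dnum" where
  "dadd x y = (fst x + fst y, snd x + snd y)"

definition dneg :: "dnum \<Rightarrow> dnum" where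
  "dneg x = (- fst x, - snd x)"

definition dsinh :: "dnum \<Rightarrow> dnum" where
  "dsinh x = (sinh (fst x), snd x * cosh (fst x))"

definition dcosh :: "dnum \<Rightarrow> dnum" where
  "dcosh x = (cosh (fst x), snd x * sinh (fst x))"

definition dscale :: "dnum \<Rightarrow> dvec \<Rightarrow> dvec" where
  "dscale l X = (fst l *\<^sub>R fst X, fst l *\<^sub>R snd X + snd l *\<^sub>R fst X)"

definition dvadd :: "dvec \<Rightarrow> dvec \<Rightarrow> dvec" where
  "dvadd X Y = (fst X + fst Y, snd X + snd Y)"

definition dinner :: "dvec \<Rightarrow> dvec \<Rightarrow> dnum" where
  "dinner X Y = (linner (fst X) (fst Y), linner (fst X) (snd Y) + linner (snd X) (fst Y))"

definition dvec_deriv :: "(real \<Rightarrow> dvec) \<Rightarrow> dvec \<Rightarrow> real \<Rightarrow> bool" where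
  "dvec_deriv X X' t \<longleftrightarrow>
     ((\<lambda>s. fst (X s)) has_vector_derivative fst X') (at t) \<and>
     ((\<lambda>s. snd (X s)) has_vector_derivative snd X') (at t)"

definition cint :: "real \<Rightarrow> (real \<Rightarrow> real) \<Rightarrow> real" where
  "cint T f = integral {0..T} f"

text \<open>Dual Steiner vector D = - V1 \<oint>Q + V3 \<oint>P (frame vectors outside integrals),
  with \<oint>Q = \<oint>q + \<epsilon>\<oint>q*.\<close>
definition steiner :: "real \<Rightarrow> (real \<Rightarrow> dvec) \<Rightarrow> (real \<Rightarrow> dvec) \<Rightarrow> (real \<Rightarrow> dnum) \<Rightarrow> (real \<Rightarrow> dnum) \<Rightarrow> real \<Rightarrow> dvec" where
  "steiner T V1 V3 P Q t =
     dvadd (dscale (dneg (cint T (\<lambda>s. fst (Q s)), cint T (\<lambda>s. snd (Q s)))) (V1 t))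
           (dscale (cint T (\<lambda>s. fst (P s)), cint T (\<lambda>s. snd (P s))) (V3 t))"

definition pitch :: "dvec \<Rightarrow> dvec \<Rightarrow> real" where
  "pitch D X = linner (fst D) (snd X) + linner (snd D) (fst X)"

definition angle_of_pitch :: "dvec \<Rightarrow> dvec \<Rightarrow> dnum" where
  "angle_of_pitch D X = dneg (dinner D X)"

definition drall :: "(real \<Rightarrow> dvec) \<Rightarrow> real \<Rightarrow> real" where
  "drall X t =
     (let a = vector_derivative (\<lambda>s. fst (X s)) (at t);
          b = vector_derivative (\<lambda>s. snd (X s)) (at t)
      in linner a b / linner a a)"

end

theory Submission
  imports Defs
begin

lemma linner_add1[simp]: "linner (x + y) z = linner x z + linner y z"
  by (simp add: linner_def algebra_simps)
lemma linner_add2[simp]: "linner z (x + y) = linner z x + linner z y"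
  by (simp add: linner_def algebra_simps)
lemma linner_scale1[simp]: "linner (c *\<^sub>R x) z = c * linner x z"
  by (simp add: linner_def algebra_simps)
lemma linner_scale2[simp]: "linner z (c *\<^sub>R x) = c * linner z x"
  by (simp add: linner_def algebra_simps)
lemma linner_neg1[simp]: "linner (- x) z = - linner x z"
  by (simp add: linner_def algebra_simps)
lemma linner_neg2[simp]: "linner z (- x) = - linner z x"
  by (simp add: linner_def algebra_simps)
lemma linner_diff1[simp]: "linner (x - y) z = linner x z - linner y z"
  by (simp add: linner_def algebra_simps)
lemma linner_diff2[simp]: "linner z (x - y) = linner z x - linner z y"
  by (simp add: linner_def algebra_simps)
lemma linner_comm: "linner x y = linner y x"
  by (simp add: linner_def algebra_simps)

theorem theorem2p2:
  fixes U1 U2 U3 :: "real \<Rightarrow> dvec"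
    and \<kappa> \<tau> :: "real \<Rightarrow> dnum"
    and \<Phi> :: dnum
    and T :: real
  assumes period: "T > 0"
    and closed: "\<And>t. U1 (t + T) = U1 t" "\<And>t. U2 (t + T) = U2 t" "\<And>t. U3 (t + T) = U3 t"
    and unit1: "\<And>t. dinner (U1 t) (U1 t) = (-1, 0)"
    and unit2: "\<And>t. dinner (U2 t) (U2 t) = (1, 0)"
    and unit3: "\<And>t. dinner (U3 t) (U3 t) = (1, 0)"
    and orth12: "\<And>t. dinner (U1 t) (U2 t) = (0, 0)"
    and orth13: "\<And>t. dinner (U1 t) (U3 t) = (0, 0)"
    and orth23: "\<And>t. dinner (U2 t) (U3 t) = (0, 0)"
    and frenet1: "\<And>t. dvec_deriv U1 (dscale (\<kappa> t) (U2 t)) t"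
    and frenet2: "\<And>t. dvec_deriv U2 (dvadd (dscale (\<kappa> t) (U1 t)) (dscale (dneg (\<tau> t)) (U3 t))) t"
    and frenet3: "\<And>t. dvec_deriv U3 (dscale (\<tau> t) (U2 t)) t"
  defines "V1 \<equiv> (\<lambda>t. dvadd (dscale (dcosh \<Phi>) (U1 t)) (dscale (dsinh \<Phi>) (U3 t)))"
    and "V2 \<equiv> U2"
    and "V3 \<equiv> (\<lambda>t. dvadd (dscale (dneg (dsinh \<Phi>)) (U1 t)) (dscale (dneg (dcosh \<Phi>)) (U3 t)))"
    and "P \<equiv> (\<lambda>t. dadd (dmult (\<kappa> t) (dcosh \<Phi>)) (dmult (\<tau> t) (dsinh \<Phi>)))"
    and "Q \<equiv> (\<lambda>t. dadd (dneg (dmult (\<kappa> t) (dsinh \<Phi>))) (dneg (dmult (\<tau> t) (dcosh \<Phi>))))"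
  shows "\<forall>t. pitch (steiner T V1 V3 P Q t) (V2 t) = 0
           \<and> angle_of_pitch (steiner T V1 V3 P Q t) (V2 t) = (0, 0)
           \<and> drall V2 t = (fst (Q t) * snd (Q t) - fst (P t) * snd (P t))
                           / ((fst (Q t))\<^sup>2 - (fst (P t))\<^sup>2)"
proof
  fix t
  obtain u1 u1s where e1: "U1 t = (u1, u1s)" by fastforce
  obtain u2 u2s where e2: "U2 t = (u2, u2s)" by fastforce
  obtain u3 u3s where e3: "U3 t = (u3, u3s)" by fastforce
  obtain k ks where ek: "\<kappa> t = (k, ks)" by fastforce
  obtain r rs where er: "\<tau> t = (r, rs)" by fastforce
  obtain f fs where ef: "\<Phi> = (f, fs)" by fastforce
  have l11: "linner u1 u1 = -1" "linner u1 u1s = 0"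
    using unit1[of t] by (auto simp: dinner_def e1 linner_comm[of u1s u1])
  have l33: "linner u3 u3 = 1" "linner u3 u3s = 0"
    using unit3[of t] by (auto simp: dinner_def e3 linner_comm[of u3s u3])
  have l12: "linner u1 u2 = 0" "linner u2 u1 = 0" "linner u1s u2 = - linner u1 u2s"
    "linner u2 u1s = - linner u1 u2s" "linner u2s u1 = linner u1 u2s"
    using orth12[of t] by (auto simp: dinner_def e1 e2 linner_comm[of u2 u1] linner_comm[of u2s u1] linner_comm[of u2 u1s])
  have l32: "linner u3 u2 = 0" "linner u2 u3 = 0" "linner u3s u2 = - linner u3 u2s"
    "linner u2 u3s = - linner u3 u2s" "linner u2s u3 = linner u3 u2s"
    using orth23[of t] by (auto simp: dinner_def e3 e2 linner_comm[of u2 u3] linner_comm[of u2s u3] linner_comm[of u2 u3s])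
  have l13: "linner u1 u3 = 0" "linner u3 u1 = 0" "linner u1s u3 = - linner u1 u3s"
    "linner u3 u1s = - linner u1 u3s" "linner u3s u1 = linner u1 u3s"
    using orth13[of t] by (auto simp: dinner_def e3 e1 linner_comm[of u3 u1] linner_comm[of u3s u1] linner_comm[of u3 u1s])
  have l11b: "linner u1s u1 = 0" using l11 linner_comm by metis
  have l33b: "linner u3s u3 = 0" using l33 linner_comm by metis
  note L = l11 l33 l12 l32 l13 l11b l33b
  show "pitch (steiner T V1 V3 P Q t) (V2 t) = 0
           \<and> angle_of_pitch (steiner T V1 V3 P Q t) (V2 t) = (0, 0)
           \<and> drall V2 t = (fst (Q t) * snd (Q t) - fst (P t) * snd (P t))
                           / ((fst (Q t))\<^sup>2 - (fst (P t))\<^sup>2)"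
  proof (intro conjI)
    show "pitch (steiner T V1 V3 P Q t) (V2 t) = 0"
      by (simp add: pitch_def steiner_def V1_def V2_def V3_def dvadd_def dscale_def dneg_def
          dsinh_def dcosh_def e1 e2 e3 ef L algebra_simps)
    show "angle_of_pitch (steiner T V1 V3 P Q t) (V2 t) = (0, 0)"
      by (simp add: angle_of_pitch_def dinner_def steiner_def V1_def V2_def V3_def dvadd_def dscale_def dneg_def
          dsinh_def dcosh_def e1 e2 e3 ef L algebra_simps)
    have d1: "vector_derivative (\<lambda>s. fst (U2 s)) (at t) = k *\<^sub>R u1 + (- r) *\<^sub>R u3"
      using frenet2[of t] unfolding dvec_deriv_def
      by (auto dest!: vector_derivative_at simp: dvadd_def dscale_def dneg_def e1 e3 ek er)
    have d2: "vector_derivative (\<lambda>s. snd (U2 s)) (at t) =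
        k *\<^sub>R u1s + ks *\<^sub>R u1 + ((- r) *\<^sub>R u3s + (- rs) *\<^sub>R u3)"
      using frenet2[of t] unfolding dvec_deriv_def
      by (auto dest!: vector_derivative_at simp: dvadd_def dscale_def dneg_def e1 e3 ek er)
    have ch: "(cosh f)\<^sup>2 - (sinh f)\<^sup>2 = 1" by (simp add: cosh_square_eq)
    have num: "r * rs - k * ks = (fst (Q t) * snd (Q t) - fst (P t) * snd (P t))"
      unfolding P_def Q_def dadd_def dmult_def dneg_def dsinh_def dcosh_def ek er ef
      apply simp
      using ch by algebra
    have den: "r\<^sup>2 - k\<^sup>2 = ((fst (Q t))\<^sup>2 - (fst (P t))\<^sup>2)"
      unfolding P_def Q_def dadd_def dmult_def dneg_def dsinh_def dcosh_def ek er ef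
      apply simp
      using ch by algebra
    have "drall V2 t = (r * rs - k * ks) / (r\<^sup>2 - k\<^sup>2)"
      unfolding drall_def Let_def V2_def d1 d2
      by (simp add: L algebra_simps power2_eq_square)
    then show "drall V2 t = (fst (Q t) * snd (Q t) - fst (P t) * snd (P t))
                           / ((fst (Q t))\<^sup>2 - (fst (P t))\<^sup>2)"
      using num den by simp
  qed
qed

end
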